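(* Let $\mathcal{S}$ be a finite state space with non-terminal states $\mathcal{S}_N$ and reward function $r:\mathcal{S}\to\mathbb{R}$ with $r(s)<0$ for $s\in\mathcal{S}_N$, and let $\lambda>0$. Assume there is exactly one start state $s_0$. Let $\mathcal{D}$ be a dataset of transitions $(s,a,r,s')$ collected by an agent starting from $s_0$ and following the default policy $\pi_d$, stored in the order in which they were collected, and let $\mathcal{S}_V$ be the set of states visited in $\mathcal{D}$. Initialize $\mathbf{Z}\in\mathbb{R}^{|\mathcal{S}|\times|\mathcal{S}|}$ as the identity matrix, and learn it by the temporal-difference update: for a transition $(s,a,r,s')$ and for all $j\in\mathcal{S}$, $\mathbf{Z}(s,j)\leftarrow\mathbf{Z}(s,j)+\alpha\,[Y-\mathbf{Z}(s,j)]$, where $Y=\exp(r/\lambda)\big(\mathbb{1}_{\{s=j\}}+\mathbf{Z}(s',j)\big)$ if $s$ is non-terminal and $Y=\exp(r/\lambda)\mathbb{1}_{\{s=j\}}$ if $s$ is terminal, with step size $\alpha\in(0,1)$. Then, after one backward sweep through $\mathcal{D}$ (applying this update to the transitions in reverse order of collection), the top eigenvector (eigenvector of the largest eigenvalue) of $\operatorname{Sym}(\mathbf{Z}_{VV})=(\mathbf{Z}_{VV}+\mathbf{Z}_{VV}^\top)/2$ is positive, where $\mathbf{Z}_{VV}$ is the submatrix of $\mathbf{Z}$ with rows and columns indexed by $\mathcal{S}_V$.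
   Context: The default policy $\pi_d$ assigns nonzero probability to all state-action pairs; $r$ in a transition denotes the reward $r(s)$ received at state $s$. "Positive" for an eigenvector means it can be chosen with all entries positive. *)

theory Defs
  imports Complex_Main
begin

type_synonym ('s, 'act) transition = "'s \<times> 'act \<times> real \<times> 's"

definition tr_src :: "('s, 'act) transition \<Rightarrow> 's" where
  "tr_src t = fst t"
definition tr_act :: "('s, 'act) transition \<Rightarrow> 'act" where
  "tr_act t = fst (snd t)"
definition tr_rew :: "('s, 'act) transition \<Rightarrow> real" where
  "tr_rew t = fst (snd (snd t))"
definition tr_dst :: "('s, 'act) transition \<Rightarrow> 's" where
  "tr_dst t = snd (snd (snd t))"

text \<open>Episodic data collection from the unique start state s0 (in order of collection):
  the first transition starts at s0; from a non-terminal state the agent continues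
  from the observed next state, except that an episode ends (and the next transition
  restarts at s0) when a terminal state is reached; a transition out of a terminal
  state is the reset transition, whose next state is s0.\<close>
definition collected_from :: "'s \<Rightarrow> 's set \<Rightarrow> ('s \<Rightarrow> real) \<Rightarrow> ('s, 'act) transition list \<Rightarrow> bool" where
  "collected_from s0 SN r D \<longleftrightarrow>
     D \<noteq> [] \<and> tr_src (D ! 0) = s0 \<and>
     (\<forall>k < length D. tr_rew (D ! k) = r (tr_src (D ! k))) \<and>
     (\<forall>k < length D. tr_src (D ! k) \<notin> SN \<longrightarrow> tr_dst (D ! k) = s0) \<and>
     (\<forall>k. Suc k < length D \<longrightarrow>
        tr_src (D ! Suc k) = tr_dst (D ! k) \<or>
        (tr_dst (D ! k) \<notin> SN \<and> tr_src (D ! Suc k) = s0))"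

definition visited_states :: "('s, 'act) transition list \<Rightarrow> 's set" where
  "visited_states D = tr_src ` set D \<union> tr_dst ` set D"

definition td_target :: "'s set \<Rightarrow> real \<Rightarrow> ('s \<Rightarrow> 's \<Rightarrow> real) \<Rightarrow> ('s, 'act) transition \<Rightarrow> 's \<Rightarrow> real" where
  "td_target SN lam Z t j =
     (if tr_src t \<in> SN
      then exp (tr_rew t / lam) * ((if tr_src t = j then 1 else 0) + Z (tr_dst t) j)
      else exp (tr_rew t / lam) * (if tr_src t = j then 1 else 0))"

definition td_update :: "'s set \<Rightarrow> real \<Rightarrow> real \<Rightarrow> ('s \<Rightarrow> 's \<Rightarrow> real) \<Rightarrow> ('s, 'act) transition \<Rightarrow> ('s \<Rightarrow> 's \<Rightarrow> real)" where
  "td_update SN lam \<alpha> Z t =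
     (\<lambda>i j. if i = tr_src t then Z i j + \<alpha> * (td_target SN lam Z t j - Z i j) else Z i j)"

definition id_mat :: "'s \<Rightarrow> 's \<Rightarrow> real" where
  "id_mat i j = (if i = j then 1 else 0)"

definition backward_sweep :: "'s set \<Rightarrow> real \<Rightarrow> real \<Rightarrow> ('s, 'act) transition list \<Rightarrow> ('s \<Rightarrow> 's \<Rightarrow> real)" where
  "backward_sweep SN lam \<alpha> D = fold (\<lambda>t Z. td_update SN lam \<alpha> Z t) (rev D) id_mat"

definition sym_mat :: "('s \<Rightarrow> 's \<Rightarrow> real) \<Rightarrow> 's \<Rightarrow> 's \<Rightarrow> real" where
  "sym_mat M i j = (M i j + M j i) / 2"

definition is_eigenpair_on :: "'s set \<Rightarrow> ('s \<Rightarrow> 's \<Rightarrow> real) \<Rightarrow> real \<Rightarrow> ('s \<Rightarrow> real) \<Rightarrow> bool" where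
  "is_eigenpair_on V M \<mu> v \<longleftrightarrow>
     (\<exists>i\<in>V. v i \<noteq> 0) \<and> (\<forall>i\<in>V. (\<Sum>j\<in>V. M i j * v j) = \<mu> * v i)"

definition eigenvalue_on :: "'s set \<Rightarrow> ('s \<Rightarrow> 's \<Rightarrow> real) \<Rightarrow> real \<Rightarrow> bool" where
  "eigenvalue_on V M \<mu> \<longleftrightarrow> (\<exists>v. is_eigenpair_on V M \<mu> v)"

definition is_top_eigenpair_on :: "'s set \<Rightarrow> ('s \<Rightarrow> 's \<Rightarrow> real) \<Rightarrow> real \<Rightarrow> ('s \<Rightarrow> real) \<Rightarrow> bool" where
  "is_top_eigenpair_on V M \<mu> v \<longleftrightarrow>
     is_eigenpair_on V M \<mu> v \<and> (\<forall>\<mu>'. eigenvalue_on V M \<mu>' \<longrightarrow> \<mu>' \<le> \<mu>)"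

end

theory Submission imports Defs "HOL-Analysis.Analysis" begin

definition bl :: "'s set \<Rightarrow> ('s \<Rightarrow> 's \<Rightarrow> real) \<Rightarrow> ('s \<Rightarrow> real) \<Rightarrow> ('s \<Rightarrow> real) \<Rightarrow> real" where
  "bl V A x y = (\<Sum>i\<in>V. \<Sum>j\<in>V. A i j * x i * y j)"

definition nrm :: "'s set \<Rightarrow> ('s \<Rightarrow> real) \<Rightarrow> real" where
  "nrm V x = (\<Sum>i\<in>V. (x i)^2)"

lemma bl_swap:
  assumes "\<forall>i j. A i j = A j i"
  shows "bl V A y v = bl V A v y"
  unfolding bl_def
  by (subst sum.swap) (simp add: assms mult.commute mult.left_commute)

lemma bl_expand:
  assumes "\<forall>i j. A i j = A j i"
  shows "bl V A (\<lambda>i. v i + t * y i) (\<lambda>i. v i + t * y i)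
     = bl V A v v + 2 * t * bl V A v y + t^2 * bl V A y y"
proof -
  have e: "\<And>i j. A i j * (v i + t * y i) * (v j + t * y j) =
      A i j * v i * v j + t * (A i j * v i * y j) + t * (A i j * y i * v j) + t^2 * (A i j * y i * y j)"
    by (simp add: algebra_simps power2_eq_square)
  have "bl V A (\<lambda>i. v i + t * y i) (\<lambda>i. v i + t * y i)
     = bl V A v v + t * bl V A v y + t * bl V A y v + t^2 * bl V A y y"
    unfolding bl_def e by (simp add: sum.distrib sum_distrib_left)
  then show ?thesis using bl_swap[OF assms, of V y v] by simp
qed

lemma nrm_expand:
  "nrm V (\<lambda>i. v i + t * y i) = nrm V v + 2 * t * (\<Sum>i\<in>V. v i * y i) + t^2 * nrm V y"
proof -
  have e: "\<And>i. (v i + t * y i)^2 = (v i)^2 + 2 * t * (v i * y i) + t^2 * (y i)^2"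
    by (simp add: algebra_simps power2_eq_square)
  show ?thesis unfolding nrm_def e by (simp add: sum.distrib sum_distrib_left)
qed

lemma psd_null:
  fixes g :: "('s \<Rightarrow> real) \<Rightarrow> real"
  assumes g: "\<And>y. g y \<ge> 0" and gv: "g v = 0"
    and exp: "\<And>t y. g (\<lambda>i. v i + t * y i) = g v + 2 * t * c y + t^2 * g y"
  shows "c y = 0"
proof (rule ccontr)
  assume "c y \<noteq> 0"
  define d where "d = g y"
  define t where "t = - c y / (d + 1)"
  have d0: "d \<ge> 0" using g d_def by auto
  have "g (\<lambda>i. v i + t * y i) = 2 * t * c y + t^2 * d" using exp gv d_def by simp
  also have "\<dots> = (c y)^2 * (-2 * (d+1) + d) / (d+1)^2"
  proof -
    have "d + 1 \<noteq> 0" using d0 by simp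
    have "d \<ge> 0" by (rule d0)
    then show ?thesis unfolding t_def by (simp add: power2_eq_square divide_simps) (simp add: algebra_simps)
  qed
  also have "\<dots> < 0"
    using d0 \<open>c y \<noteq> 0\<close> by (intro divide_neg_pos mult_pos_neg) auto
  finally show False using g[of "\<lambda>i. v i + t * y i"] by simp
qed

lemma sym_top_eig:
  fixes A :: "'s::finite \<Rightarrow> 's \<Rightarrow> real"
  assumes V: "V \<noteq> {}" and sym: "\<forall>i j. A i j = A j i"
    and nn: "\<forall>i\<in>V. \<forall>j\<in>V. A i j \<ge> 0"
  shows "\<exists>\<mu> v. is_top_eigenpair_on V A \<mu> v \<and> (\<forall>i\<in>V. v i \<ge> 0)"
proof -
  define S where "S = {x::real^'s. (\<forall>i. i \<notin> V \<longrightarrow> x$i = 0) \<and> (\<Sum>i\<in>V. (x$i)^2) = 1}"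
  define f where "f = (\<lambda>x::real^'s. \<Sum>i\<in>V. \<Sum>j\<in>V. A i j * x$i * x$j)"
  have fbl: "f x = bl V A (\<lambda>i. x$i) (\<lambda>i. x$i)" for x unfolding f_def bl_def by simp
  have closed: "closed S"
  proof -
    have "S = (\<Inter>i\<in>-V. {x. x$i = 0}) \<inter> {x. (\<Sum>i\<in>V. (x$i)^2) = 1}"
      unfolding S_def by auto
    moreover have "closed (\<Inter>i\<in>-V. {x::real^'s. x$i = 0})"
      by (intro closed_INT ballI closed_Collect_eq continuous_intros)
    moreover have "closed {x::real^'s. (\<Sum>i\<in>V. (x$i)^2) = 1}"
      by (intro closed_Collect_eq continuous_intros)
    ultimately show ?thesis by auto
  qed
  have bounded: "bounded S"
  proof -
    have "norm x \<le> real CARD('s)" if "x \<in> S" for x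
    proof -
      have "\<bar>x$i\<bar> \<le> 1" for i
      proof (cases "i \<in> V")
        case True
        have "(x$i)^2 \<le> (\<Sum>i\<in>V. (x$i)^2)"
          by (rule member_le_sum) (use True in auto)
        then show ?thesis using that unfolding S_def by (simp add: abs_square_le_1)
      next
        case False then show ?thesis using that unfolding S_def by auto
      qed
      then have "(\<Sum>i\<in>UNIV. \<bar>x$i\<bar>) \<le> (\<Sum>i\<in>(UNIV::'s set). 1)"
        by (intro sum_mono) auto
      then show ?thesis using norm_le_l1_cart[of x] by simp
    qed
    then show ?thesis unfolding bounded_iff by blast
  qed
  obtain i0 where i0: "i0 \<in> V" using V by auto
  have ne: "S \<noteq> {}"
  proof -
    have "(\<chi> i. if i = i0 then 1 else 0) \<in> S"
      unfolding S_def using i0 by (auto simp: if_distrib[of "\<lambda>x. x^2"] cong: if_cong)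
    then show ?thesis by auto
  qed
  have cont: "continuous_on S f" unfolding f_def by (intro continuous_intros)
  obtain x where xS: "x \<in> S" and xmax: "\<forall>y\<in>S. f y \<le> f x"
    using continuous_attains_sup[OF compact_eq_bounded_closed[THEN iffD2, OF conjI[OF bounded closed]] ne cont]
    by blast
  define M where "M = f x"
  have bound: "bl V A y y \<le> M * nrm V y" for y
  proof (cases "nrm V y = 0")
    case True
    then have "\<forall>i\<in>V. y i = 0" unfolding nrm_def
      by (subst (asm) sum_nonneg_eq_0_iff) auto
    then have "bl V A y y = 0" unfolding bl_def by simp
    then show ?thesis using True by simp
  next
    case False
    have np: "nrm V y > 0" using False unfolding nrm_def
      by (metis order_le_less sum_nonneg zero_le_power2)
    define c where "c = 1 / sqrt (nrm V y)"
    have c2: "c^2 = 1 / nrm V y" using np unfolding c_def by (simp add: power_divide)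
    define z where "z = (\<chi> i. if i \<in> V then c * y i else 0)"
    have "(\<Sum>i\<in>V. (z$i)^2) = c^2 * nrm V y"
      unfolding z_def nrm_def by (simp add: sum_distrib_left power_mult_distrib)
    then have "z \<in> S" using c2 np unfolding S_def z_def by auto
    then have "f z \<le> M" using xmax M_def by auto
    moreover have "f z = c^2 * bl V A y y"
      unfolding f_def bl_def z_def by (simp add: sum_distrib_left power2_eq_square algebra_simps)
    ultimately have "bl V A y y / nrm V y \<le> M" using c2 by simp
    then show ?thesis using np by (simp add: divide_le_eq mult.commute)
  qed
  define v where "v = (\<lambda>i. \<bar>x$i\<bar>)"
  have nv: "nrm V v = 1" using xS unfolding S_def nrm_def v_def by simp
  have "f x \<le> bl V A v v" unfolding fbl bl_def v_def
    using nn by (intro sum_mono) (auto simp: abs_mult[symmetric] mult.assoc intro!: mult_left_mono)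
  then have bv: "bl V A v v = M" using bound[of v] nv M_def by simp
  define g where "g = (\<lambda>y. M * nrm V y - bl V A y y)"
  define cc where "cc = (\<lambda>y. M * (\<Sum>i\<in>V. v i * y i) - bl V A v y)"
  have g0: "g y \<ge> 0" for y using bound[of y] g_def by simp
  have gv: "g v = 0" using bv nv g_def by simp
  have gexp: "g (\<lambda>i. v i + t * y i) = g v + 2 * t * cc y + t^2 * g y" for t y
    unfolding g_def cc_def bl_expand[OF sym] nrm_expand by (simp add: algebra_simps)
  define w where "w = (\<lambda>i. M * v i - (\<Sum>j\<in>V. A i j * v j))"
  have "cc w = 0" by (rule psd_null[where g=g and v=v and c=cc, OF g0 gv gexp])
  moreover have "cc w = (\<Sum>i\<in>V. (w i)^2)"
  proof -
    have "bl V A v w = (\<Sum>i\<in>V. w i * (\<Sum>j\<in>V. A i j * v j))"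
      unfolding bl_def using sym
      by (subst sum.swap) (simp add: sum_distrib_left algebra_simps)
    then show ?thesis unfolding cc_def w_def
      by (simp add: power2_eq_square sum_subtractf[symmetric] sum_distrib_left algebra_simps)
  qed
  ultimately have "(\<Sum>i\<in>V. (w i)^2) = 0" by simp
  then have "\<forall>i\<in>V. w i = 0"
    by (subst (asm) sum_nonneg_eq_0_iff) auto
  then have eig: "\<forall>i\<in>V. (\<Sum>j\<in>V. A i j * v j) = M * v i" unfolding w_def by simp
  have nz: "\<exists>i\<in>V. v i \<noteq> 0"
  proof (rule ccontr)
    assume "\<not> ?thesis" then have "nrm V v = 0" unfolding nrm_def by simp
    then show False using nv by simp
  qed
  have top: "\<mu>' \<le> M" if ev: "eigenvalue_on V A \<mu>'" for \<mu>'
  proof -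
    obtain u where u: "is_eigenpair_on V A \<mu>' u" using ev unfolding eigenvalue_on_def by blast
    then obtain k where k: "k \<in> V" "u k \<noteq> 0" and ue: "\<forall>i\<in>V. (\<Sum>j\<in>V. A i j * u j) = \<mu>' * u i"
      unfolding is_eigenpair_on_def by auto
    have np: "nrm V u > 0"
    proof -
      have "(u k)^2 \<le> nrm V u" unfolding nrm_def by (rule member_le_sum) (use k in auto)
      moreover have "(u k)^2 > 0" using k by simp
      ultimately show ?thesis by linarith
    qed
    have "bl V A u u = (\<Sum>i\<in>V. u i * (\<Sum>j\<in>V. A i j * u j))"
      unfolding bl_def by (simp add: sum_distrib_left algebra_simps)
    also have "\<dots> = \<mu>' * nrm V u" unfolding nrm_def using ue
      by (simp add: sum_distrib_left power2_eq_square algebra_simps)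
    finally have "\<mu>' * nrm V u \<le> M * nrm V u" using bound[of u] by simp
    then show ?thesis using np by simp
  qed
  show ?thesis
    apply (rule exI[of _ M], rule exI[of _ v])
    using eig nz top unfolding is_top_eigenpair_on_def is_eigenpair_on_def v_def by auto
qed

lemma conv_nn: "0 < (\<alpha>::real) \<Longrightarrow> \<alpha> < 1 \<Longrightarrow> 0 \<le> z \<Longrightarrow> 0 \<le> y \<Longrightarrow> 0 \<le> z + \<alpha> * (y - z)"
proof -
  assume a: "0 < \<alpha>" "\<alpha> < 1" "0 \<le> z" "0 \<le> y"
  have "z + \<alpha> * (y - z) = (1 - \<alpha>) * z + \<alpha> * y" by algebra
  then show ?thesis using a by simp
qed

lemma conv_pos: "0 < (\<alpha>::real) \<Longrightarrow> \<alpha> < 1 \<Longrightarrow> 0 \<le> z \<Longrightarrow> 0 \<le> y \<Longrightarrow> 0 < z \<or> 0 < y \<Longrightarrow> 0 < z + \<alpha> * (y - z)"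
proof -
  assume a: "0 < \<alpha>" "\<alpha> < 1" "0 \<le> z" "0 \<le> y" "0 < z \<or> 0 < y"
  have "z + \<alpha> * (y - z) = (1 - \<alpha>) * z + \<alpha> * y" by algebra
  moreover have "0 < (1 - \<alpha>) * z \<or> 0 < \<alpha> * y" using a by auto
  moreover have "0 \<le> (1 - \<alpha>) * z" "0 \<le> \<alpha> * y" using a by auto
  ultimately show ?thesis by linarith
qed

definition good :: "('s \<Rightarrow> 's \<Rightarrow> real) \<Rightarrow> bool" where
  "good Z \<longleftrightarrow> (\<forall>i j. 0 \<le> Z i j) \<and> (\<forall>i. 0 < Z i i)"

lemma target_nn: "good Z \<Longrightarrow> 0 \<le> td_target SN lam Z t j"
  unfolding good_def td_target_def by (auto intro!: mult_nonneg_nonneg add_nonneg_nonneg)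

lemma target_diag: "good Z \<Longrightarrow> 0 < td_target SN lam Z t (tr_src t)"
  unfolding good_def td_target_def by (auto intro!: mult_pos_pos add_pos_nonneg)

lemma target_edge: "good Z \<Longrightarrow> tr_src t \<in> SN \<Longrightarrow> 0 < td_target SN lam Z t (tr_dst t)"
  unfolding good_def td_target_def by (auto intro!: mult_pos_pos add_nonneg_pos)

lemma update_props:
  assumes g: "good Z" and a: "0 < \<alpha>" "\<alpha> < 1"
  shows "good (td_update SN lam \<alpha> Z t)"
    and "Z i j > 0 \<Longrightarrow> td_update SN lam \<alpha> Z t i j > 0"
    and "tr_src t \<in> SN \<Longrightarrow> td_update SN lam \<alpha> Z t (tr_src t) (tr_dst t) > 0"
proof -
  have Z0: "0 \<le> Z i j" for i j using g unfolding good_def by auto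
  have Zd: "0 < Z i i" for i using g unfolding good_def by auto
  have n1: "0 \<le> td_update SN lam \<alpha> Z t i j" for i j
    unfolding td_update_def using conv_nn[OF a Z0[of i j] target_nn[OF g, of SN lam t j]] Z0[of i j] by (cases "i = tr_src t") simp_all
  have n2: "0 < td_update SN lam \<alpha> Z t i i" for i
    unfolding td_update_def using conv_pos[OF a Z0[of i i] target_nn[OF g, of SN lam t i]] Zd[of i] by (cases "i = tr_src t") simp_all
  show "good (td_update SN lam \<alpha> Z t)"
    unfolding good_def using n1 n2 by blast
  show "Z i j > 0 \<Longrightarrow> td_update SN lam \<alpha> Z t i j > 0"
    unfolding td_update_def using conv_pos[OF a Z0[of i j] target_nn[OF g, of SN lam t j]] by (cases "i = tr_src t") simp_all
  show "tr_src t \<in> SN \<Longrightarrow> td_update SN lam \<alpha> Z t (tr_src t) (tr_dst t) > 0"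
    unfolding td_update_def using conv_pos[OF a Z0[of "tr_src t" "tr_dst t"] target_nn[OF g, of SN lam t "tr_dst t"]] target_edge[OF g, of t SN lam] by simp
qed

lemma fold_props:
  assumes a: "0 < \<alpha>" "\<alpha> < 1"
  shows "good Z \<Longrightarrow> good (fold (\<lambda>t Z. td_update SN lam \<alpha> Z t) xs Z)
     \<and> (\<forall>i j. Z i j > 0 \<longrightarrow> fold (\<lambda>t Z. td_update SN lam \<alpha> Z t) xs Z i j > 0)
     \<and> (\<forall>t\<in>set xs. tr_src t \<in> SN \<longrightarrow> fold (\<lambda>t Z. td_update SN lam \<alpha> Z t) xs Z (tr_src t) (tr_dst t) > 0)"
proof (induction xs arbitrary: Z)
  case Nil then show ?case by simp
next
  case (Cons x xs)
  let ?Z' = "td_update SN lam \<alpha> Z x"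
  have g': "good ?Z'" using update_props(1)[OF Cons.prems a] .
  note IH = Cons.IH[OF g']
  have p2: "\<forall>i j. Z i j > 0 \<longrightarrow> ?Z' i j > 0"
    using update_props(2)[OF Cons.prems a] by blast
  have p3: "tr_src x \<in> SN \<longrightarrow> ?Z' (tr_src x) (tr_dst x) > 0"
    using update_props(3)[OF Cons.prems a] by blast
  show ?case unfolding fold_Cons comp_def
    using IH p2 p3 by (metis set_ConsD)
qed

lemma reach:
  assumes data: "collected_from s0 SN r D" and s0W: "s0 \<in> W"
    and step: "\<forall>k<length D. tr_src (D!k) \<in> SN \<longrightarrow> tr_src (D!k) \<in> W \<longrightarrow> tr_dst (D!k) \<in> W"
  shows "visited_states D \<subseteq> W"
proof -
  have srcW: "k < length D \<longrightarrow> tr_src (D!k) \<in> W" for k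
  proof (induction k)
    case 0 then show ?case using data s0W unfolding collected_from_def by auto
  next
    case (Suc k)
    show ?case
    proof
      assume k: "Suc k < length D"
      then have sk: "tr_src (D!k) \<in> W" using Suc by simp
      have dk: "tr_dst (D!k) \<in> W"
        using step sk k data s0W unfolding collected_from_def
        by (metis Suc_lessD)
      show "tr_src (D!Suc k) \<in> W" using data k dk s0W unfolding collected_from_def by metis
    qed
  qed
  have dstW: "k < length D \<Longrightarrow> tr_dst (D!k) \<in> W" for k
    using srcW[of k] step data s0W unfolding collected_from_def by metis
  show ?thesis
  proof
    fix x assume "x \<in> visited_states D"
    then obtain t where t: "t \<in> set D" "x = tr_src t \<or> x = tr_dst t"
      unfolding visited_states_def by auto
    then obtain k where "k < length D" "t = D!k" by (metis in_set_conv_nth)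
    then show "x \<in> W" using t srcW dstW by auto
  qed
qed

theorem propositionC3:
  fixes SN :: "'s::finite set"
    and r :: "'s \<Rightarrow> real"
    and lam \<alpha> :: real
    and s0 :: 's
    and D :: "('s, 'act) transition list"
  assumes r_neg: "\<forall>s\<in>SN. r s < 0"
    and lam_pos: "lam > 0"
    and alpha: "0 < \<alpha>" "\<alpha> < 1"
    and data: "collected_from s0 SN r D"
  shows "\<exists>\<mu> v. is_top_eigenpair_on (visited_states D)
                 (sym_mat (backward_sweep SN lam \<alpha> D)) \<mu> v
             \<and> (\<forall>i\<in>visited_states D. v i > 0)"
proof -
  define Z where "Z = backward_sweep SN lam \<alpha> D"
  define A where "A = sym_mat Z"
  define V where "V = visited_states D"
  have gid: "good id_mat" unfolding good_def id_mat_def by auto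
  note F = fold_props[OF alpha gid, of SN lam "rev D"]
  have gZ: "good Z" using F unfolding Z_def backward_sweep_def by simp
  have edge: "\<forall>t\<in>set D. tr_src t \<in> SN \<longrightarrow> Z (tr_src t) (tr_dst t) > 0"
    using F unfolding Z_def backward_sweep_def by simp
  have sym: "\<forall>i j. A i j = A j i" unfolding A_def sym_mat_def by simp
  have nn: "\<forall>i j. A i j \<ge> 0" using gZ unfolding A_def sym_mat_def good_def by auto
  have Aedge: "\<forall>t\<in>set D. tr_src t \<in> SN \<longrightarrow> A (tr_src t) (tr_dst t) > 0"
    using edge gZ unfolding A_def sym_mat_def good_def
    by (metis add_pos_nonneg half_gt_zero)
  have s0V: "s0 \<in> V" using data unfolding collected_from_def V_def visited_states_def
    by (metis image_eqI nth_mem length_greater_0_conv UnI1)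
  then have Vne: "V \<noteq> {}" by auto
  obtain \<mu> v where top: "is_top_eigenpair_on V A \<mu> v" and vnn: "\<forall>i\<in>V. v i \<ge> 0"
    using sym_top_eig[OF Vne sym] nn by blast
  have eig: "\<forall>i\<in>V. (\<Sum>j\<in>V. A i j * v j) = \<mu> * v i" and nz: "\<exists>i\<in>V. v i \<noteq> 0"
    using top unfolding is_top_eigenpair_on_def is_eigenpair_on_def by auto
  define W1 where "W1 = {i\<in>V. v i = 0}"
  define W2 where "W2 = {i\<in>V. v i > 0}"
  have cl1: "j \<in> W1" if "i \<in> W1" "j \<in> V" "A i j > 0" for i j
  proof -
    have "(\<Sum>k\<in>V. A i k * v k) = 0" using eig that unfolding W1_def by auto
    then have "\<forall>k\<in>V. A i k * v k = 0"
      using nn vnn by (subst (asm) sum_nonneg_eq_0_iff) auto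
    then show ?thesis using that unfolding W1_def by auto
  qed
  have cl2: "j \<in> W2" if "i \<in> W2" "j \<in> V" "A i j > 0" for i j
  proof (rule ccontr)
    assume "j \<notin> W2"
    then have "j \<in> W1" using vnn that(2) unfolding W1_def W2_def by force
    then have "i \<in> W1" using cl1[of j i] sym that unfolding W2_def by auto
    then show False using that unfolding W1_def W2_def by auto
  qed
  have inV: "tr_dst (D!k) \<in> V" if "k < length D" for k
    using that unfolding V_def visited_states_def by auto
  have st: "\<forall>k<length D. tr_src (D!k) \<in> SN \<longrightarrow> tr_src (D!k) \<in> W \<longrightarrow> tr_dst (D!k) \<in> W"
    if "\<And>i j. i \<in> W \<Longrightarrow> j \<in> V \<Longrightarrow> A i j > 0 \<Longrightarrow> j \<in> W" for W
    using that inV Aedge by (metis nth_mem)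
  have "s0 \<in> W1 \<or> s0 \<in> W2" using s0V vnn unfolding W1_def W2_def by force
  moreover have "s0 \<notin> W1"
  proof
    assume "s0 \<in> W1"
    then have "V \<subseteq> W1" using reach[OF data _ st[of W1]] cl1 unfolding V_def by blast
    then show False using nz unfolding W1_def by auto
  qed
  ultimately have "V \<subseteq> W2" using reach[OF data _ st[of W2]] cl2 unfolding V_def by blast
  then show ?thesis using top unfolding A_def Z_def V_def W2_def by auto
qed

end
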